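(* Let $0<s<\tfrac12$. Let $T$ be the distribution on $\mathbb{R}^n$ given by $\langle T,\varphi\rangle=\int_{\mathbb{R}^n}\varphi\,dx$ and $S$ the distribution on $\mathbb{R}^{2n}$ given by $\langle\!\langle S,\Theta\rangle\!\rangle=\iint_{\mathbb{R}^{2n}}\frac{\Theta(x,y)-\Theta(x,x)}{|x-y|^{n+2s}}\,dx\,dy$. Then for every $\Phi\in\mathscr{C}_c^\infty(\mathbb{R}^{2n})$, $$Kir_{T,S}\Phi(x)=\int_{\mathbb{R}^n}\frac{\Phi(x,y)-\Phi(x,x)}{|x-y|^{n+2s}}\,dy.$$
   Context: $\mathscr{S}_1=\mathscr{C}_c^\infty(\mathbb{R}^n)$, $\mathscr{S}_2=\mathscr{C}_c^\infty(\mathbb{R}^{2n})$. A function $\psi$ is the Kirchhoff divergence $Kir_{T,S}\Phi$ if $\varphi\psi\in\mathscr{S}_1$ and $\langle T,\varphi\psi\rangle=\langle\!\langle S,\varphi\Phi\rangle\!\rangle$ for every $\varphi\in\mathscr{S}_1$, where $(\varphi\Phi)(x,y)=\varphi(x)\Phi(x,y)$. *)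

theory Defs
  imports "HOL-Analysis.Analysis"
begin

fun Ck :: "nat \<Rightarrow> ('a::euclidean_space \<Rightarrow> real) \<Rightarrow> bool" where
  "Ck 0 f = continuous_on UNIV f"
| "Ck (Suc k) f = (f differentiable_on UNIV \<and>
      (\<forall>b\<in>Basis. Ck k (\<lambda>x. frechet_derivative f (at x) b)))"

definition smooth_fun :: "('a::euclidean_space \<Rightarrow> real) \<Rightarrow> bool" where
  "smooth_fun f \<longleftrightarrow> (\<forall>k. Ck k f)"

definition test_fun :: "('a::euclidean_space \<Rightarrow> real) \<Rightarrow> bool" where
  "test_fun f \<longleftrightarrow> smooth_fun f \<and> bounded {x. f x \<noteq> 0}"

definition is_Kir ::
  "(('a::euclidean_space \<Rightarrow> real) \<Rightarrow> real) \<Rightarrow> (('a \<times> 'a \<Rightarrow> real) \<Rightarrow> real)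
   \<Rightarrow> ('a \<times> 'a \<Rightarrow> real) \<Rightarrow> ('a \<Rightarrow> real) \<Rightarrow> bool" where
  "is_Kir T S \<Phi> \<psi> \<longleftrightarrow>
     (\<forall>\<phi>. test_fun \<phi> \<longrightarrow>
        test_fun (\<lambda>x. \<phi> x * \<psi> x) \<and>
        T (\<lambda>x. \<phi> x * \<psi> x) = S (\<lambda>z. \<phi> (fst z) * \<Phi> z))"

end

theory Submission
  imports Defs
begin


definition pd :: "('a::euclidean_space \<Rightarrow> real) \<Rightarrow> 'a \<Rightarrow> 'a \<Rightarrow> real" where
  "pd f u = (\<lambda>x. frechet_derivative f (at x) u)"

lemma Ck_Suc_D: "Ck (Suc k) f \<Longrightarrow> (f has_derivative frechet_derivative f (at x)) (at x)"
  by (auto simp: differentiable_on_def frechet_derivative_works)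

lemma Ck_cont: assumes "Ck k f" shows "continuous_on UNIV f"
proof (cases k)
  case 0 then show ?thesis using assms by simp
next
  case (Suc m) then show ?thesis using assms
    by (auto intro!: differentiable_imp_continuous_on)
qed

lemma Ck_mono: "Ck (Suc k) f \<Longrightarrow> Ck k f"
proof (induction k arbitrary: f)
  case 0 then show ?case by (auto intro!: differentiable_imp_continuous_on)
next
  case (Suc k) then show ?case by auto
qed


lemma pd_eq: "(f has_derivative f') (at x) \<Longrightarrow> pd f u x = f' u"
  unfolding pd_def by (metis frechet_derivative_at)

lemma Ck_lin: "Ck k f \<Longrightarrow> Ck k g \<Longrightarrow> Ck k (\<lambda>x. a * f x + b * g x)"
proof (induction k arbitrary: f g)
  case 0 then show ?case by (auto intro!: continuous_intros)
next
  case (Suc k)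
  have d: "((\<lambda>x. a * f x + b * g x) has_derivative (\<lambda>u. a * pd f u x + b * pd g u x)) (at x)" for x
    using Ck_Suc_D[OF Suc.prems(1), of x] Ck_Suc_D[OF Suc.prems(2), of x]
    unfolding pd_def by (auto intro!: derivative_eq_intros)
  have "frechet_derivative (\<lambda>x. a * f x + b * g x) (at x) u = a * pd f u x + b * pd g u x" for x u
    using d[of x] by (metis pd_def pd_eq)
  moreover have "Ck k (\<lambda>x. a * pd f b' x + b * pd g b' x)" if "b' \<in> Basis" for b'
    using Suc that unfolding pd_def by auto
  ultimately show ?case using d by (auto simp: differentiable_on_def differentiable_def) blast+
qed

lemma Ck_const: "Ck k (\<lambda>x. c)"
proof (induction k arbitrary: c)
  case 0 then show ?case by simp
next
  case (Suc k)
  have "frechet_derivative (\<lambda>x. c) (at x) u = 0" for x u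
    by (metis frechet_derivative_at has_derivative_const)
  then show ?case using Suc by (simp add: differentiable_on_def)
qed

lemma Ck_cong: "Ck k f \<Longrightarrow> (\<And>x. f x = g x) \<Longrightarrow> Ck k g"
proof -
  assume "Ck k f" "\<And>x. f x = g x"
  then have "f = g" by auto
  then show ?thesis using \<open>Ck k f\<close> by simp
qed

lemma Ck_sum: "finite I \<Longrightarrow> (\<And>i. i \<in> I \<Longrightarrow> Ck k (f i)) \<Longrightarrow> Ck k (\<lambda>x. \<Sum>i\<in>I. c i * f i x)"
proof (induction I rule: finite_induct)
  case empty then show ?case using Ck_const[of k 0] by simp
next
  case (insert j I)
  have "Ck k (\<lambda>x. c j * f j x + 1 * (\<Sum>i\<in>I. c i * f i x))"
    by (rule Ck_lin) (use insert in auto)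
  then show ?case using insert by simp
qed

lemma Ck_mult: "Ck k f \<Longrightarrow> Ck k g \<Longrightarrow> Ck k (\<lambda>x. f x * g x)"
proof (induction k arbitrary: f g)
  case 0 then show ?case by (auto intro!: continuous_intros)
next
  case (Suc k)
  have d: "((\<lambda>x. f x * g x) has_derivative (\<lambda>u. f x * pd g u x + pd f u x * g x)) (at x)" for x
    using Ck_Suc_D[OF Suc.prems(1), of x] Ck_Suc_D[OF Suc.prems(2), of x]
    unfolding pd_def by (auto intro!: derivative_eq_intros)
  have "frechet_derivative (\<lambda>x. f x * g x) (at x) u = f x * pd g u x + pd f u x * g x" for x u
    using d[of x] by (metis pd_def pd_eq)
  moreover have "Ck k (\<lambda>x. f x * pd g b' x + pd f b' x * g x)" if "b' \<in> Basis" for b'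
  proof -
    have "Ck k (\<lambda>x. 1 * (f x * pd g b' x) + 1 * (pd f b' x * g x))"
      apply (rule Ck_lin; rule Suc.IH)
      using Suc.prems that Ck_mono unfolding pd_def by auto
    then show ?thesis by simp
  qed
  ultimately show ?case using d by (auto simp: differentiable_on_def differentiable_def) blast+
qed



lemma test_smooth: "test_fun f \<Longrightarrow> Ck k f"
  by (simp add: test_fun_def smooth_fun_def)

lemma test_D: "test_fun f \<Longrightarrow> (f has_derivative frechet_derivative f (at x)) (at x)"
  using test_smooth[of f "Suc 0"] Ck_Suc_D by blast

lemma test_lin: "test_fun f \<Longrightarrow> linear (frechet_derivative f (at x))"
  using test_D has_derivative_linear by blast

lemma pd_expand:
  assumes "test_fun f"
  shows "pd f u x = (\<Sum>b\<in>Basis. (u \<bullet> b) * pd f b x)"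
proof -
  have l: "linear (frechet_derivative f (at x))" using test_lin[OF assms] .
  have "pd f u x = frechet_derivative f (at x) (\<Sum>b\<in>Basis. (u \<bullet> b) *\<^sub>R b)"
    by (simp add: pd_def euclidean_representation)
  also have "\<dots> = (\<Sum>b\<in>Basis. (u \<bullet> b) * frechet_derivative f (at x) b)"
    using l by (simp add: linear_sum linear_scale)
  finally show ?thesis by (simp add: pd_def)
qed

lemma pd_support:
  assumes "test_fun f" "x \<notin> closure {y. f y \<noteq> 0}"
  shows "pd f u x = 0"
proof -
  have "((\<lambda>y. 0) has_derivative (\<lambda>_. 0)) (at x)" by (rule has_derivative_const)
  then have "(f has_derivative (\<lambda>_. 0)) (at x)"
  proof (rule has_derivative_transform_within_open[where s="- closure {y. f y \<noteq> 0}"])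
    show "open (- closure {y. f y \<noteq> 0})" using closed_closure open_Compl by blast
    show "x \<in> - closure {y. f y \<noteq> 0}" using assms(2) by simp
    fix y assume "y \<in> - closure {y. f y \<noteq> 0}"
    then have "y \<notin> {y. f y \<noteq> 0}" using closure_subset[of "{y. f y \<noteq> 0}"] by auto
    then show "0 = f y" by simp
  qed
  from pd_eq[OF this, of u] show ?thesis by simp
qed

lemma test_pd: assumes "test_fun f" shows "test_fun (pd f u)"
proof -
  have "Ck k (pd f u)" for k
  proof -
    have "Ck k (\<lambda>x. \<Sum>b\<in>Basis. (u \<bullet> b) * pd f b x)"
      by (rule Ck_sum) (use test_smooth[OF assms, of "Suc k"] in \<open>auto simp: pd_def\<close>)
    then show ?thesis by (rule Ck_cong) (rule pd_expand[OF assms, symmetric])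
  qed
  moreover have "bounded {x. pd f u x \<noteq> 0}"
  proof -
    have "{x. pd f u x \<noteq> 0} \<subseteq> closure {y. f y \<noteq> 0}" using pd_support[OF assms] by blast
    moreover have "bounded (closure {y. f y \<noteq> 0})" using assms by (simp add: test_fun_def bounded_closure)
    ultimately show ?thesis using bounded_subset by blast
  qed
  ultimately show ?thesis by (simp add: test_fun_def smooth_fun_def)
qed

lemma test_bounded: assumes "test_fun f" shows "\<exists>M. \<forall>x. \<bar>f x\<bar> \<le> M"
proof -
  let ?K = "closure {y. f y \<noteq> 0}"
  have c: "continuous_on UNIV f" using Ck_cont[OF test_smooth[OF assms, of 0]] .
  have "compact ?K" using assms by (simp add: test_fun_def compact_closure)
  then have "compact (f ` ?K)" by (rule compact_continuous_image[OF continuous_on_subset[OF c], rotated]) simp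
  then have "bounded (f ` ?K)" by (rule compact_imp_bounded)
  then obtain M where M: "\<forall>y\<in>f ` ?K. norm y \<le> M" unfolding bounded_iff by blast
  have "\<bar>f x\<bar> \<le> \<bar>M\<bar>" for x
  proof (cases "x \<in> ?K")
    case True then have "norm (f x) \<le> M" using M by blast
    then show ?thesis by simp
  next
    case False then have "f x = 0" using closure_subset[of "{y. f y \<noteq> 0}"] by auto
    then show ?thesis by simp
  qed
  then show ?thesis by blast
qed

lemma test_deriv_bound: assumes "test_fun f"
  shows "\<exists>C\<ge>0. \<forall>u x. \<bar>pd f u x\<bar> \<le> C * norm u"
proof -
  have "\<forall>b\<in>Basis. \<exists>M. \<forall>x. \<bar>pd f b x\<bar> \<le> M" using test_bounded test_pd assms by blast
  then obtain M where M: "\<And>b x. b \<in> Basis \<Longrightarrow> \<bar>pd f b x\<bar> \<le> M b" by metis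
  define C where "C = (\<Sum>b\<in>Basis. \<bar>M b\<bar>)"
  have "\<bar>pd f u x\<bar> \<le> C * norm u" for u x
  proof -
    have "\<bar>pd f u x\<bar> = \<bar>\<Sum>b\<in>Basis. (u \<bullet> b) * pd f b x\<bar>" using pd_expand[OF assms, of u x] by (rule arg_cong)
    also have "\<dots> \<le> (\<Sum>b\<in>Basis. \<bar>(u \<bullet> b) * pd f b x\<bar>)" by (rule sum_abs)
    also have "\<dots> \<le> (\<Sum>b\<in>Basis. norm u * \<bar>M b\<bar>)"
    proof (rule sum_mono)
      fix b :: 'a assume b: "b \<in> Basis"
      have "\<bar>u \<bullet> b\<bar> \<le> norm u" using b by (simp add: Basis_le_norm)
      moreover have "\<bar>pd f b x\<bar> \<le> \<bar>M b\<bar>" using M[OF b, of x] by simp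
      ultimately show "\<bar>(u \<bullet> b) * pd f b x\<bar> \<le> norm u * \<bar>M b\<bar>"
        by (simp add: abs_mult mult_mono)
    qed
    also have "\<dots> = C * norm u" by (simp add: C_def sum_distrib_left mult.commute)
    finally show ?thesis .
  qed
  moreover have "C \<ge> 0" by (simp add: C_def sum_nonneg)
  ultimately show ?thesis by blast
qed

lemma test_lip: assumes "test_fun f"
  shows "\<exists>L\<ge>0. \<forall>a b. \<bar>f a - f b\<bar> \<le> L * norm (a - b)"
proof -
  obtain C where C: "C \<ge> 0" "\<And>u x. \<bar>pd f u x\<bar> \<le> C * norm u" using test_deriv_bound[OF assms] by blast
  have "\<bar>f a - f b\<bar> \<le> C * norm (a - b)" for a b
  proof -
    have "norm (f a - f b) \<le> C * norm (a - b)"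
    proof (rule differentiable_bound[where S=UNIV and f'="\<lambda>x. frechet_derivative f (at x)"])
      show "convex (UNIV :: 'a set)" by simp
      show "(f has_derivative frechet_derivative f (at x)) (at x within UNIV)" for x
        using test_D[OF assms] by simp
      show "onorm (frechet_derivative f (at x)) \<le> C" for x
        by (rule onorm_le) (use C(2) in \<open>auto simp: pd_def\<close>)
    qed auto
    then show ?thesis by simp
  qed
  then show ?thesis using C by blast
qed

lemma test_pd_lip: assumes "test_fun f"
  shows "\<exists>C\<ge>0. \<forall>u a b. \<bar>pd f u a - pd f u b\<bar> \<le> C * norm u * norm (a - b) \<and> \<bar>pd f u a\<bar> \<le> C * norm u"
proof -
  have ex: "\<forall>e\<in>Basis. \<exists>L\<ge>0. \<forall>a b. \<bar>pd f e a - pd f e b\<bar> \<le> L * norm (a - b)"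
    using test_lip[OF test_pd[OF assms]] by blast
  obtain L where L0: "\<forall>e\<in>Basis. L e \<ge> 0 \<and> (\<forall>a b. \<bar>pd f e a - pd f e b\<bar> \<le> L e * norm (a - b))"
    using bchoice[OF ex] by blast
  then have L: "\<And>e a b. e \<in> Basis \<Longrightarrow> \<bar>pd f e a - pd f e b\<bar> \<le> L e * norm (a - b)"
    "\<And>e. e \<in> Basis \<Longrightarrow> L e \<ge> 0" by auto
  obtain C0 where C0: "C0 \<ge> 0" "\<And>u x. \<bar>pd f u x\<bar> \<le> C0 * norm u" using test_deriv_bound[OF assms] by blast
  define C where "C = C0 + (\<Sum>e\<in>Basis. L e)"
  have Lsum: "(\<Sum>e\<in>Basis. L e) \<ge> 0" using L(2) by (simp add: sum_nonneg)
  have "\<bar>pd f u a - pd f u b\<bar> \<le> C * norm u * norm (a - b)" for u a b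
  proof -
    have "pd f u a - pd f u b = (\<Sum>e\<in>Basis. (u \<bullet> e) * pd f e a) - (\<Sum>e\<in>Basis. (u \<bullet> e) * pd f e b)"
      using pd_expand[OF assms, of u a] pd_expand[OF assms, of u b] by linarith
    also have "\<dots> = (\<Sum>e\<in>Basis. (u \<bullet> e) * (pd f e a - pd f e b))"
      by (simp add: right_diff_distrib sum_subtractf)
    finally have "\<bar>pd f u a - pd f u b\<bar> = \<bar>\<Sum>e\<in>Basis. (u \<bullet> e) * (pd f e a - pd f e b)\<bar>" by simp
    also have "\<dots> \<le> (\<Sum>e\<in>Basis. \<bar>(u \<bullet> e) * (pd f e a - pd f e b)\<bar>)" by (rule sum_abs)
    also have "\<dots> \<le> (\<Sum>e\<in>Basis. norm u * (L e * norm (a - b)))"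
    proof (rule sum_mono)
      fix e :: 'a assume e: "e \<in> Basis"
      have "\<bar>u \<bullet> e\<bar> \<le> norm u" using e by (simp add: Basis_le_norm)
      then show "\<bar>(u \<bullet> e) * (pd f e a - pd f e b)\<bar> \<le> norm u * (L e * norm (a - b))"
        using L(1)[OF e, of a b] by (simp add: abs_mult mult_mono)
    qed
    also have "\<dots> = norm u * ((\<Sum>e\<in>Basis. L e) * norm (a - b))"
      by (simp add: sum_distrib_left sum_distrib_right)
    also have "\<dots> \<le> norm u * (C * norm (a - b))"
      by (intro mult_left_mono mult_right_mono) (auto simp: C_def C0)
    also have "\<dots> = C * norm u * norm (a - b)" by simp
    finally show ?thesis .
  qed
  moreover have "\<bar>pd f u a\<bar> \<le> C * norm u" for u a
  proof -
    have "C0 * norm u \<le> C * norm u" by (rule mult_right_mono) (auto simp: C_def Lsum)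
    then show ?thesis using C0(2)[of u a] by linarith
  qed
  moreover have "C \<ge> 0" using C0 Lsum by (simp add: C_def)
  ultimately show ?thesis by blast
qed



lemma cball_measure_le:
  fixes r :: real assumes "0 \<le> r"
  shows "emeasure lborel (cball (0::'a::euclidean_space) r) \<le> ennreal ((2 * r) ^ DIM('a))"
proof -
  have sub: "cball (0::'a) r \<subseteq> cbox (- (r *\<^sub>R One)) (r *\<^sub>R One)"
  proof
    fix x :: 'a assume "x \<in> cball 0 r"
    then have nx: "norm x \<le> r" by simp
    have "\<bar>x \<bullet> b\<bar> \<le> r" if "b \<in> Basis" for b
      using Basis_le_norm[OF that, of x] nx by linarith
    then show "x \<in> cbox (- (r *\<^sub>R One)) (r *\<^sub>R One)"
      by (force simp: mem_box abs_le_iff)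
  qed
  have "emeasure lborel (cball (0::'a) r) \<le> emeasure lborel (cbox (- (r *\<^sub>R One)) (r *\<^sub>R One) :: 'a set)"
    by (rule emeasure_mono[OF sub]) simp
  also have "\<dots> = ennreal (\<Prod>b\<in>(Basis::'a set). (r *\<^sub>R One - (- (r *\<^sub>R One))) \<bullet> b)"
    by (subst emeasure_lborel_cbox_eq) (use assms in auto)
  also have "(\<Prod>b\<in>(Basis::'a set). (r *\<^sub>R One - (- (r *\<^sub>R One))) \<bullet> b) = (\<Prod>b\<in>(Basis::'a set). 2 * r)"
    by (rule prod.cong) (auto simp: inner_diff_left inner_add_left)
  also have "\<dots> = ennreal ((2 * r) ^ DIM('a))" by simp
  finally show ?thesis .
qed

definition Wf :: "real \<Rightarrow> real \<Rightarrow> 'a::euclidean_space \<Rightarrow> real" where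
  "Wf a p h = min (norm h) 1 powr a / norm h powr p"

lemma Wf_nonneg: "Wf a p h \<ge> 0" by (simp add: Wf_def)

lemma Wf_meas[measurable]: "Wf a p \<in> borel_measurable borel"
  unfolding Wf_def by measurable

lemma Wf_small:
  fixes h :: "'a::euclidean_space"
  assumes "0 < norm h" "norm h \<le> 1" "0 < p - a"
  shows "\<exists>k::nat. Wf a p h \<le> 2 powr ((p - a) * (real k + 1)) \<and> norm h \<le> 2 powr (- real k)"
proof -
  define t where "t = 1 / norm h"
  have t1: "t \<ge> 1" "t > 0" using assms by (auto simp: t_def)
  define k where "k = nat \<lfloor>log 2 t\<rfloor>"
  have lg: "log 2 t \<ge> 0" using t1 by simp
  have k1: "real k \<le> log 2 t" using lg by (simp add: k_def)
  have k2: "log 2 t < real k + 1" using lg by (simp add: k_def)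
  have "2 powr (real k) \<le> 2 powr (log 2 t)" using k1 by (rule powr_mono) simp
  then have A: "2 powr (real k) \<le> t" using t1 by simp
  have "2 powr (log 2 t) < 2 powr (real k + 1)" using k2 by (rule powr_less_mono) simp
  then have B: "t < 2 powr (real k + 1)" using t1 by simp
  have "norm h = 1 / t" using assms by (simp add: t_def)
  also have "\<dots> \<le> 1 / 2 powr (real k)" using A by (simp add: frac_le)
  also have "\<dots> = 2 powr (- real k)" by (simp add: powr_minus_divide)
  finally have C: "norm h \<le> 2 powr (- real k)" .
  have "Wf a p h = norm h powr a / norm h powr p" using assms by (simp add: Wf_def min_def)
  also have "\<dots> = t powr (p - a)" using assms
    by (simp add: t_def powr_diff[symmetric] powr_divide powr_minus_divide[symmetric] powr_minus)
  also have "\<dots> \<le> (2 powr (real k + 1)) powr (p - a)"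
    using B t1 assms by (intro powr_mono2) auto
  also have "\<dots> = 2 powr ((p - a) * (real k + 1))" by (simp add: powr_powr mult.commute)
  finally show ?thesis using C by blast
qed

lemma Wf_large:
  fixes h :: "'a::euclidean_space"
  assumes "1 < norm h" "0 \<le> p"
  shows "\<exists>k::nat. Wf a p h \<le> 2 powr (- (p * real k)) \<and> norm h \<le> 2 powr (real k + 1)"
proof -
  define t where "t = norm h"
  have t1: "t > 1" using assms by (auto simp: t_def)
  define k where "k = nat \<lfloor>log 2 t\<rfloor>"
  have lg: "log 2 t \<ge> 0" using t1 by simp
  have k1: "real k \<le> log 2 t" using lg by (simp add: k_def)
  have k2: "log 2 t < real k + 1" using lg by (simp add: k_def)
  have "2 powr (real k) \<le> 2 powr (log 2 t)" using k1 by (rule powr_mono) simp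
  then have A: "2 powr (real k) \<le> t" using t1 by simp
  have "2 powr (log 2 t) < 2 powr (real k + 1)" using k2 by (rule powr_less_mono) simp
  then have B: "t < 2 powr (real k + 1)" using t1 by simp
  have "Wf a p h = 1 / t powr p" using assms by (simp add: Wf_def min_def t_def)
  also have "\<dots> \<le> 1 / (2 powr (real k)) powr p"
    using A assms t1 by (intro divide_left_mono powr_mono2 mult_pos_pos) auto
  also have "\<dots> = 2 powr (- (p * real k))" by (simp add: powr_powr powr_minus_divide mult.commute)
  finally show ?thesis using B t_def by auto
qed

lemma pow2_pow: "((2::real) powr x) ^ m = 2 powr (x * real m)"
  by (simp add: powr_realpow[symmetric] powr_powr)

lemma geq1: "2 powr (\<beta> * (real j + 1)) * (2 * 2 powr (- real j)) ^ n = 2 powr (\<beta> + n) * (2 powr (\<beta> - n)) ^ j"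
proof -
  have "2 * 2 powr (- real j) = 2 powr (1 - real j)" by (simp add: powr_diff powr_minus_divide)
  then have "2 powr (\<beta> * (real j + 1)) * (2 * 2 powr (- real j)) ^ n = 2 powr (\<beta> * (real j + 1)) * 2 powr ((1 - real j) * n)"
    by (simp add: pow2_pow)
  also have "\<dots> = 2 powr (\<beta> * (real j + 1) + (1 - real j) * n)" by (rule powr_add[symmetric])
  also have "\<beta> * (real j + 1) + (1 - real j) * n = (\<beta> + n) + (\<beta> - n) * real j" by (simp add: algebra_simps)
  also have "2 powr (\<beta> + n + (\<beta> - n) * real j) = 2 powr (\<beta> + n) * (2 powr (\<beta> - n)) ^ j"
    by (simp add: powr_add pow2_pow)
  finally show ?thesis .
qed

lemma geq2: "2 powr (- (p * real j)) * (2 * 2 powr (real j + 1)) ^ n = 2 powr (2 * real n) * (2 powr (real n - p)) ^ j"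
proof -
  have "2 * 2 powr (real j + 1) = 2 powr (real j + 2)" by (simp add: powr_add)
  then have "2 powr (- (p * real j)) * (2 * 2 powr (real j + 1)) ^ n = 2 powr (- (p * real j)) * 2 powr ((real j + 2) * n)"
    by (simp add: pow2_pow)
  also have "\<dots> = 2 powr (- (p * real j) + (real j + 2) * n)" by (rule powr_add[symmetric])
  also have "- (p * real j) + (real j + 2) * n = 2 * real n + (real n - p) * real j" by (simp add: algebra_simps)
  also have "2 powr (2 * real n + (real n - p) * real j) = 2 powr (2 * real n) * (2 powr (real n - p)) ^ j"
    by (simp add: powr_add pow2_pow)
  finally show ?thesis .
qed

lemma Wf_nn_finite:
  assumes b: "0 < p - a" "p - a < real DIM('a)" "real DIM('a) < p"
  shows "(\<integral>\<^sup>+h. ennreal (Wf a p (h::'a::euclidean_space)) \<partial>lborel) < \<infinity>"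
proof -
  define \<beta> where "\<beta> = p - a"
  define n where "n = DIM('a)"
  define c where "c = (\<lambda>j::nat. 2 powr (\<beta> * (real j + 1)))"
  define d where "d = (\<lambda>j::nat. 2 powr (- (p * real j)))"
  define r where "r = (\<lambda>j::nat. 2 powr (- real j))"
  define R where "R = (\<lambda>j::nat. 2 powr (real j + 1))"
  define F where "F = (\<lambda>j h. ennreal (c j) * indicator (cball (0::'a) (r j)) h
                           + ennreal (d j) * indicator (cball (0::'a) (R j)) h)"
  define g where "g = (\<lambda>j. c j * (2 * r j) ^ n + d j * (2 * R j) ^ n)"
  have p0: "0 \<le> p" using b by simp
  have cb[measurable]: "cball (0::'a) t \<in> sets borel" for t by simp
  have Fm[measurable]: "F j \<in> borel_measurable lborel" for j
    unfolding F_def by measurable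
  have pw: "ennreal (Wf a p h) \<le> (\<Sum>j. F j h)" for h :: 'a
  proof -
    have le: "F k h \<le> (\<Sum>j. F j h)" for k
      using sum_le_suminf[of "\<lambda>j. F j h" "{k}"] by (simp add: summableI)
    consider "h = 0" | "0 < norm h" "norm h \<le> 1" | "1 < norm h" by force
    then show ?thesis
    proof cases
      case 1 then show ?thesis by (simp add: Wf_def)
    next
      case 2
      then obtain k where k: "Wf a p h \<le> c k" "norm h \<le> r k"
        using Wf_small[OF 2 b(1)] unfolding c_def r_def \<beta>_def by blast
      have "ennreal (Wf a p h) \<le> ennreal (c k)" using k(1) by (rule ennreal_leI)
      also have "\<dots> \<le> F k h" using k(2) by (simp add: F_def)
      finally show ?thesis using le order_trans by blast
    next
      case 3
      then obtain k where k: "Wf a p h \<le> d k" "norm h \<le> R k"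
        using Wf_large[OF 3 p0] unfolding d_def R_def by blast
      have "ennreal (Wf a p h) \<le> ennreal (d k)" using k(1) by (rule ennreal_leI)
      also have "\<dots> \<le> F k h" using k(2) by (simp add: F_def)
      finally show ?thesis using le order_trans by blast
    qed
  qed
  have Fint: "(\<integral>\<^sup>+h. F j h \<partial>lborel) \<le> ennreal (g j)" for j
  proof -
    have r0: "0 \<le> r j" "0 \<le> R j" by (auto simp: r_def R_def)
    have "(\<integral>\<^sup>+h. F j h \<partial>lborel) = ennreal (c j) * emeasure lborel (cball (0::'a) (r j))
          + ennreal (d j) * emeasure lborel (cball (0::'a) (R j))"
      unfolding F_def by (subst nn_integral_add) (auto simp: nn_integral_cmult_indicator)
    also have "\<dots> \<le> ennreal (c j) * ennreal ((2 * r j) ^ n) + ennreal (d j) * ennreal ((2 * R j) ^ n)"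
      using cball_measure_le[OF r0(1), where 'a='a] cball_measure_le[OF r0(2), where 'a='a]
      unfolding n_def by (intro add_mono mult_left_mono) auto
    also have "\<dots> = ennreal (g j)"
      using r0 by (simp add: g_def ennreal_mult ennreal_plus c_def d_def)
    finally show ?thesis .
  qed
  have geq: "g j = 2 powr (\<beta> + n) * (2 powr (\<beta> - n)) ^ j + 2 powr (2 * real n) * (2 powr (real n - p)) ^ j" for j
    unfolding g_def c_def d_def r_def R_def using geq1 geq2 by simp
  have q1: "2 powr (\<beta> - n) < 1"
  proof -
    have "2 powr (\<beta> - n) < 2 powr 0" by (rule powr_less_mono) (use b in \<open>auto simp: \<beta>_def n_def\<close>)
    then show ?thesis by simp
  qed
  have q2: "2 powr (real n - p) < 1"
  proof -
    have "2 powr (real n - p) < 2 powr 0" by (rule powr_less_mono) (use b in \<open>auto simp: n_def\<close>)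
    then show ?thesis by simp
  qed
  have sg: "summable g"
    unfolding geq[abs_def]
    by (intro summable_add summable_mult summable_geometric) (use q1 q2 in auto)
  have g0: "0 \<le> g j" for j by (simp add: g_def c_def d_def r_def R_def)
  have "(\<integral>\<^sup>+h. ennreal (Wf a p (h::'a)) \<partial>lborel) \<le> (\<integral>\<^sup>+h. (\<Sum>j. F j h) \<partial>lborel)"
    by (rule nn_integral_mono) (rule pw)
  also have "\<dots> = (\<Sum>j. \<integral>\<^sup>+h. F j h \<partial>lborel)" by (rule nn_integral_suminf) simp
  also have "\<dots> \<le> (\<Sum>j. ennreal (g j))" by (intro suminf_le Fint) (auto intro: summableI)
  also have "\<dots> < \<infinity>" using ennreal_suminf_neq_top[OF sg g0] by (simp add: less_top)
  finally show ?thesis .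
qed

lemma Wf_integrable:
  assumes "0 < p - a" "p - a < real DIM('a)" "real DIM('a) < p"
  shows "integrable lborel (Wf a p :: 'a::euclidean_space \<Rightarrow> real)"
  proof (rule integrableI_bounded)
  have "(\<integral>\<^sup>+ x. ennreal (norm (Wf a p (x::'a) :: real)) \<partial>lborel) = (\<integral>\<^sup>+ x. ennreal (Wf a p (x::'a)) \<partial>lborel)"
    by (rule nn_integral_cong) (simp add: Wf_nonneg)
  then show "(\<integral>\<^sup>+ x. ennreal (norm (Wf a p (x::'a) :: real)) \<partial>lborel) < \<infinity>"
    using Wf_nn_finite[OF assms] by simp
qed simp



definition G :: "('a::euclidean_space \<times> 'a \<Rightarrow> real) \<Rightarrow> 'a \<Rightarrow> 'a \<Rightarrow> real" where
  "G \<Phi> x h = \<Phi> (x, x + h) - \<Phi> (x, x)"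

lemma min_powr_le:
  fixes x m a :: real
  assumes "0 \<le> x" "0 \<le> m" "m \<le> 1" "0 \<le> a" "a \<le> 1"
  shows "min x m \<le> x powr (1 - a) * m powr a"
proof (cases "x \<le> m")
  case True
  show ?thesis
  proof (cases "x = 0")
    case True then show ?thesis by simp
  next
    case False
    then have "min x m = x powr (1 - a) * x powr a" using True assms by (simp add: powr_add[symmetric])
    also have "\<dots> \<le> x powr (1 - a) * m powr a"
      using True assms by (intro mult_left_mono powr_mono2) auto
    finally show ?thesis .
  qed
next
  case False
  show ?thesis
  proof (cases "m = 0")
    case True then show ?thesis using assms by simp
  next
    case mne: False
    then have "min x m = m powr (1 - a) * m powr a" using False assms by (simp add: powr_add[symmetric])
    also have "\<dots> \<le> x powr (1 - a) * m powr a"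
      using False assms by (intro mult_right_mono powr_mono2) auto
    finally show ?thesis .
  qed
qed

lemma le_powr_small: fixes y a :: real shows "0 \<le> y \<Longrightarrow> y \<le> 1 \<Longrightarrow> 0 < a \<Longrightarrow> a \<le> 1 \<Longrightarrow> y \<le> y powr a"
proof (cases "y = 0")
  case False
  assume "0 \<le> y" "y \<le> 1" "0 < a" "a \<le> 1"
  then have "y powr 1 \<le> y powr a" using powr_mono'[of a 1 y] by simp
  then show ?thesis using False \<open>0 \<le> y\<close> by simp
qed simp

lemma norm_pair_le: "norm (u, v) \<le> norm u + norm v"
  using sqrt_sum_squares_le_sum_abs[of "norm u" "norm v"] by (simp add: norm_Pair)

lemma G_bound: assumes "test_fun \<Phi>"
  shows "\<exists>C\<ge>0. \<forall>x h. \<bar>G \<Phi> x h\<bar> \<le> C * min (norm h) 1"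
proof -
  obtain L where L: "L \<ge> 0" "\<And>a b. \<bar>\<Phi> a - \<Phi> b\<bar> \<le> L * norm (a - b)" using test_lip[OF assms] by blast
  obtain M where M: "\<And>z. \<bar>\<Phi> z\<bar> \<le> M" using test_bounded[OF assms] by blast
  have M0: "M \<ge> 0" using M[of undefined] by linarith
  define C where "C = L + 2 * M"
  have "\<bar>G \<Phi> x h\<bar> \<le> C * min (norm h) 1" for x h
  proof -
    have 1: "\<bar>G \<Phi> x h\<bar> \<le> L * norm h"
      using L(2)[of "(x, x + h)" "(x, x)"] by (simp add: G_def)
    have 2: "\<bar>G \<Phi> x h\<bar> \<le> 2 * M"
      using M[of "(x, x + h)"] M[of "(x, x)"] by (simp add: G_def)
    show ?thesis
    proof (cases "norm h \<le> 1")
      case True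
      have "L * norm h \<le> C * norm h" using M0 by (intro mult_right_mono) (auto simp: C_def)
      then show ?thesis using 1 True by simp
    next
      case False
      then show ?thesis using 2 L(1) by (simp add: C_def)
    qed
  qed
  moreover have "C \<ge> 0" using L M0 by (simp add: C_def)
  ultimately show ?thesis by blast
qed

lemma G_pd_bounds: assumes "test_fun \<Phi>"
  shows "\<exists>C\<ge>0. \<forall>u x z h.
     \<bar>G (pd \<Phi> (u, u)) x h\<bar> \<le> C * norm u * min (norm h) 1 \<and>
     \<bar>G (pd \<Phi> (u, u)) z h - G (pd \<Phi> (u, u)) x h\<bar> \<le> C * norm u * min (norm (z - x)) (min (norm h) 1)"
proof -
  obtain C0 where C0: "C0 \<ge> 0"
    "\<And>w a b. \<bar>pd \<Phi> w a - pd \<Phi> w b\<bar> \<le> C0 * norm w * norm (a - b)"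
    "\<And>w a. \<bar>pd \<Phi> w a\<bar> \<le> C0 * norm w"
    using test_pd_lip[OF assms] by blast
  have nuu: "norm (u, u) \<le> 2 * norm u" for u :: 'a using norm_pair_le[of u u] by simp
  have b1: "\<bar>G (pd \<Phi> (u, u)) x h\<bar> \<le> 4 * C0 * norm u * min (norm h) 1" for u x h
  proof -
    have "\<bar>G (pd \<Phi> (u, u)) x h\<bar> \<le> C0 * norm (u, u) * norm h"
      using C0(2)[of "(u, u)" "(x, x + h)" "(x, x)"] by (simp add: G_def)
    also have "\<dots> \<le> C0 * (2 * norm u) * norm h"
      using C0(1) nuu[of u] by (intro mult_right_mono mult_left_mono) auto
    finally have i1: "\<bar>G (pd \<Phi> (u, u)) x h\<bar> \<le> 2 * C0 * norm u * norm h" by simp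
    have "\<bar>G (pd \<Phi> (u, u)) x h\<bar> \<le> 2 * (C0 * norm (u, u))"
      using C0(3)[of "(u, u)" "(x, x + h)"] C0(3)[of "(u, u)" "(x, x)"] by (simp add: G_def)
    also have "\<dots> \<le> 2 * (C0 * (2 * norm u))"
      using C0(1) nuu[of u] by (intro mult_left_mono) auto
    finally have i2: "\<bar>G (pd \<Phi> (u, u)) x h\<bar> \<le> 4 * C0 * norm u" by simp
    show ?thesis
    proof (cases "norm h \<le> 1")
      case True
      have "2 * C0 * norm u * norm h \<le> 4 * C0 * norm u * norm h"
        using C0(1) by (intro mult_right_mono) auto
      then show ?thesis using i1 True by simp
    next
      case False then show ?thesis using i2 by simp
    qed
  qed
  have b2: "\<bar>G (pd \<Phi> (u, u)) z h - G (pd \<Phi> (u, u)) x h\<bar> \<le> 8 * C0 * norm u * norm (z - x)" for u x z h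
  proof -
    have nzx: "norm ((z, z + h) - (x, x + h)) \<le> 2 * norm (z - x)" "norm ((z, z) - (x, x)) \<le> 2 * norm (z - x)"
      using norm_pair_le[of "z - x" "z - x"] by auto
    have "\<bar>G (pd \<Phi> (u, u)) z h - G (pd \<Phi> (u, u)) x h\<bar>
        \<le> \<bar>pd \<Phi> (u, u) (z, z + h) - pd \<Phi> (u, u) (x, x + h)\<bar> + \<bar>pd \<Phi> (u, u) (z, z) - pd \<Phi> (u, u) (x, x)\<bar>"
      by (simp add: G_def)
    also have "\<dots> \<le> C0 * norm (u, u) * (2 * norm (z - x)) + C0 * norm (u, u) * (2 * norm (z - x))"
      using C0(2)[of "(u, u)" "(z, z + h)" "(x, x + h)"] C0(2)[of "(u, u)" "(z, z)" "(x, x)"]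
        C0(1) nzx
      by (smt (verit, best) mult_left_mono mult_nonneg_nonneg norm_ge_zero)
    also have "\<dots> = 4 * (C0 * norm (u, u)) * norm (z - x)" by simp
    also have "\<dots> \<le> 4 * (C0 * (2 * norm u)) * norm (z - x)"
      using C0(1) nuu[of u] by (intro mult_right_mono mult_left_mono) auto
    finally show ?thesis by simp
  qed
  define C where "C = 8 * C0"
  have "\<bar>G (pd \<Phi> (u, u)) x h\<bar> \<le> C * norm u * min (norm h) 1" for u x h
  proof -
    have "4 * C0 * norm u * min (norm h) 1 \<le> C * norm u * min (norm h) 1"
      using C0(1) by (intro mult_right_mono) (auto simp: C_def)
    then show ?thesis using b1[of u x h] by linarith
  qed
  moreover have "\<bar>G (pd \<Phi> (u, u)) z h - G (pd \<Phi> (u, u)) x h\<bar> \<le> C * norm u * min (norm (z - x)) (min (norm h) 1)" for u x z h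
  proof (cases "norm (z - x) \<le> min (norm h) 1")
    case True
    then show ?thesis using b2[of u z h x] by (simp add: C_def min_def)
  next
    case False
    have "\<bar>G (pd \<Phi> (u, u)) z h - G (pd \<Phi> (u, u)) x h\<bar> \<le> \<bar>G (pd \<Phi> (u, u)) z h\<bar> + \<bar>G (pd \<Phi> (u, u)) x h\<bar>"
      by simp
    also have "\<dots> \<le> 8 * C0 * norm u * min (norm h) 1" using b1[of u z h] b1[of u x h] by simp
    finally show ?thesis using False by (simp add: C_def min_def)
  qed
  moreover have "C \<ge> 0" using C0 by (simp add: C_def)
  ultimately show ?thesis by blast
qed



definition psi :: "real \<Rightarrow> ('a::euclidean_space \<times> 'a \<Rightarrow> real) \<Rightarrow> 'a \<Rightarrow> real" where
  "psi p \<Phi> x = (\<integral>h. G \<Phi> x h / norm h powr p \<partial>lborel)"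

lemma test_meas: "test_fun \<Phi> \<Longrightarrow> \<Phi> \<in> borel_measurable borel"
  by (rule borel_measurable_continuous_onI) (rule Ck_cont[OF test_smooth[of \<Phi> 0]])

lemma G_deriv: assumes "test_fun \<Phi>"
  shows "((\<lambda>y. G \<Phi> y h) has_derivative (\<lambda>u. G (pd \<Phi> (u, u)) y h)) (at y)"
proof -
  have d1: "((\<lambda>y. (y, y + h)) has_derivative (\<lambda>u. (u, u))) (at y)"
    by (auto intro!: derivative_eq_intros)
  have d2: "((\<lambda>y. (y, y)) has_derivative (\<lambda>u. (u, u))) (at y)"
    by (auto intro!: derivative_eq_intros)
  have e1: "((\<lambda>y. \<Phi> (y, y + h)) has_derivative (\<lambda>u. frechet_derivative \<Phi> (at (y, y + h)) (u, u))) (at y)"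
    using has_derivative_compose[OF d1 test_D[OF assms]] by simp
  have e2: "((\<lambda>y. \<Phi> (y, y)) has_derivative (\<lambda>u. frechet_derivative \<Phi> (at (y, y)) (u, u))) (at y)"
    using has_derivative_compose[OF d2 test_D[OF assms]] by simp
  show ?thesis
    using has_derivative_diff[OF e1 e2] by (simp add: G_def pd_def)
qed

lemma G_meas: assumes "test_fun \<Phi>"
  shows "(\<lambda>h. G \<Phi> x h / norm h powr p) \<in> borel_measurable lborel"
proof -
  have [measurable]: "\<Phi> \<in> borel_measurable borel" using test_meas[OF assms] .
  show ?thesis unfolding G_def by measurable
qed

lemma G_Wf_bound:
  fixes h :: "'a::euclidean_space"
  assumes "\<bar>g\<bar> \<le> C * min (norm h) 1" "0 < a" "a \<le> 1" "C \<ge> 0"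
  shows "\<bar>g / norm h powr p\<bar> \<le> C * Wf a p h"
proof -
  have "\<bar>g / norm h powr p\<bar> = \<bar>g\<bar> / norm h powr p" by simp
  also have "\<dots> \<le> C * min (norm h) 1 / norm h powr p"
    using assms(1) by (intro divide_right_mono) auto
  also have "\<dots> \<le> C * min (norm h) 1 powr a / norm h powr p"
    using assms le_powr_small[of "min (norm h) 1" a] by (intro divide_right_mono mult_left_mono) auto
  finally show ?thesis by (simp add: Wf_def)
qed

lemma G_int:
  assumes "test_fun \<Phi>" "0 < p - a" "p - a < real DIM('a)" "real DIM('a) < p" "0 < a" "a \<le> 1"
  shows "integrable lborel (\<lambda>h. G \<Phi> (x::'a::euclidean_space) h / norm h powr p)"
proof -
  obtain C where C: "C \<ge> 0" "\<And>x h. \<bar>G \<Phi> x h\<bar> \<le> C * min (norm h) 1" using G_bound[OF assms(1)] by blast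
  have "integrable lborel (\<lambda>h::'a. C * Wf a p h)"
    using Wf_integrable[OF assms(2-4)] by simp
  then show ?thesis
  proof (rule Bochner_Integration.integrable_bound)
    show "(\<lambda>h. G \<Phi> x h / norm h powr p) \<in> borel_measurable lborel" by (rule G_meas[OF assms(1)])
    show "AE h in lborel. norm (G \<Phi> x h / norm h powr p) \<le> norm (C * Wf a p h)"
    proof (intro AE_I2)
      fix h :: 'a
      have "\<bar>G \<Phi> x h / norm h powr p\<bar> \<le> C * Wf a p h" by (rule G_Wf_bound[OF C(2) assms(5,6) C(1)])
      then show "norm (G \<Phi> x h / norm h powr p) \<le> norm (C * Wf a p h)"
        using C(1) Wf_nonneg[of a p h] by (simp add: abs_mult)
    qed
  qed
qed

lemma G_rem:
  assumes "test_fun \<Phi>" "C \<ge> 0"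
    and bnd: "\<And>u x z. \<bar>G (pd \<Phi> (u, u)) z h - G (pd \<Phi> (u, u)) x h\<bar> \<le> C * norm u * min (norm (z - x)) m"
  shows "\<bar>G \<Phi> (x + v) h - G \<Phi> x h - G (pd \<Phi> (v, v)) x h\<bar> \<le> norm v * (C * min (norm v) m)"
proof -
  have "norm (G \<Phi> (x + v) h - G \<Phi> x h - G (pd \<Phi> ((x + v - x), (x + v - x))) x h) \<le> norm (x + v - x) * (C * min (norm v) m)"
  proof (rule differentiable_bound_linearization[where S="cball x (norm v)" and f="\<lambda>y. G \<Phi> y h"
        and f'="\<lambda>y u. G (pd \<Phi> (u, u)) y h"])
    show "x + t *\<^sub>R (x + v - x) \<in> cball x (norm v)" if "t \<in> {0..1}" for t
      using that mult_left_le_one_le[of "norm v" t] by (auto simp: dist_norm)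
    show "((\<lambda>y. G \<Phi> y h) has_derivative (\<lambda>u. G (pd \<Phi> (u, u)) y h)) (at y within cball x (norm v))" for y
      by (rule has_derivative_at_withinI[OF G_deriv[OF assms(1)]])
    show "onorm ((\<lambda>u. G (pd \<Phi> (u, u)) y h) - (\<lambda>u. G (pd \<Phi> (u, u)) x h)) \<le> C * min (norm v) m"
      if "y \<in> cball x (norm v)" for y
    proof (rule onorm_le)
      fix u :: 'a
      have "norm (y - x) \<le> norm v" using that by (simp add: dist_norm norm_minus_commute)
      then have "min (norm (y - x)) m \<le> min (norm v) m" by simp
      then have "C * norm u * min (norm (y - x)) m \<le> C * norm u * min (norm v) m"
        using assms(2) by (intro mult_left_mono) auto
      then show "norm (((\<lambda>u. G (pd \<Phi> (u, u)) y h) - (\<lambda>u. G (pd \<Phi> (u, u)) x h)) u) \<le> C * min (norm v) m * norm u"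
        using bnd[of u x y] bnd[of u y x] by (simp add: fun_diff_def mult_ac norm_minus_commute)
    qed
    show "x \<in> cball x (norm v)" by simp
  qed
  then show ?thesis by simp
qed



lemma pd_add_pair: "test_fun \<Phi> \<Longrightarrow> pd \<Phi> (v + w, v + w) z = pd \<Phi> (v, v) z + pd \<Phi> (w, w) z"
proof -
  assume t: "test_fun \<Phi>"
  have "(v + w, v + w) = (v, v) + (w, w)" by simp
  then show ?thesis using linear_add[OF test_lin[OF t, of z], of "(v, v)" "(w, w)"] by (simp add: pd_def)
qed

lemma pd_scale_pair: "test_fun \<Phi> \<Longrightarrow> pd \<Phi> (r *\<^sub>R v, r *\<^sub>R v) z = r * pd \<Phi> (v, v) z"
proof -
  assume t: "test_fun \<Phi>"
  have "(r *\<^sub>R v, r *\<^sub>R v) = r *\<^sub>R (v, v)" by simp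
  then show ?thesis using linear_scale[OF test_lin[OF t, of z], of r "(v, v)"] by (simp add: pd_def)
qed

lemma G_pd_add: "test_fun \<Phi> \<Longrightarrow> G (pd \<Phi> (v + w, v + w)) x h = G (pd \<Phi> (v, v)) x h + G (pd \<Phi> (w, w)) x h"
  by (simp add: G_def pd_add_pair)

lemma G_pd_scale: "test_fun \<Phi> \<Longrightarrow> G (pd \<Phi> (r *\<^sub>R v, r *\<^sub>R v)) x h = r * G (pd \<Phi> (v, v)) x h"
  by (simp add: G_def pd_scale_pair right_diff_distrib)

lemma psi_deriv:
  fixes \<Phi> :: "'a::euclidean_space \<times> 'a \<Rightarrow> real"
  assumes t: "test_fun \<Phi>" and ex: "0 < p - a" "p - a < real DIM('a)" "real DIM('a) < p" "0 < a" "a < 1"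
  shows "(psi p \<Phi> has_derivative (\<lambda>v. psi p (pd \<Phi> (v, v)) x)) (at x)"
proof -
  have a1: "a \<le> 1" using ex by simp
  obtain C where C: "C \<ge> 0"
    "\<And>u x h. \<bar>G (pd \<Phi> (u, u)) x h\<bar> \<le> C * norm u * min (norm h) 1"
    "\<And>u x z h. \<bar>G (pd \<Phi> (u, u)) z h - G (pd \<Phi> (u, u)) x h\<bar> \<le> C * norm u * min (norm (z - x)) (min (norm h) 1)"
    using G_pd_bounds[OF t] by blast
  define I where "I = (\<integral>h. Wf a p (h::'a) \<partial>lborel)"
  have WI: "integrable lborel (Wf a p :: 'a \<Rightarrow> real)" using Wf_integrable[OF ex(1-3)] .
  have I0: "I \<ge> 0" unfolding I_def by (rule integral_nonneg_AE) (simp add: Wf_nonneg)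
  have int: "integrable lborel (\<lambda>h. G \<Psi> y h / norm h powr p)" if "test_fun \<Psi>" for \<Psi> and y :: 'a
    using G_int[OF that ex(1-4) a1] .
  have tp: "test_fun (pd \<Phi> (v, v))" for v using test_pd[OF t] .
  have Lb: "\<bar>psi p (pd \<Phi> (v, v)) y\<bar> \<le> norm v * (C * I)" for v y
  proof -
    have "\<bar>psi p (pd \<Phi> (v, v)) y\<bar> \<le> (\<integral>h. C * norm v * Wf a p (h::'a) \<partial>lborel)"
      unfolding psi_def
    proof (rule integral_abs_bound_integral)
      show "integrable lborel (\<lambda>h. G (pd \<Phi> (v, v)) y h / norm h powr p)" by (rule int[OF tp])
      show "integrable lborel (\<lambda>h. C * norm v * Wf a p (h::'a))" using WI by simp
      show "\<bar>G (pd \<Phi> (v, v)) y h / norm h powr p\<bar> \<le> C * norm v * Wf a p h" for h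
        by (rule G_Wf_bound[OF C(2) ex(4) a1]) (use C(1) in simp)
    qed
    also have "\<dots> = norm v * (C * I)" by (simp add: I_def)
    finally show ?thesis .
  qed
  have lin: "bounded_linear (\<lambda>v. psi p (pd \<Phi> (v, v)) x)"
  proof (rule bounded_linear_intro[where K="C * I"])
    fix v w :: 'a
    have "(\<lambda>h. G (pd \<Phi> (v + w, v + w)) x h / norm h powr p)
        = (\<lambda>h. G (pd \<Phi> (v, v)) x h / norm h powr p + G (pd \<Phi> (w, w)) x h / norm h powr p)"
      by (simp add: G_pd_add[OF t] add_divide_distrib)
    then show "psi p (pd \<Phi> (v + w, v + w)) x = psi p (pd \<Phi> (v, v)) x + psi p (pd \<Phi> (w, w)) x"
      unfolding psi_def using Bochner_Integration.integral_add[OF int[OF tp] int[OF tp]] by simp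
  next
    fix r :: real and v :: 'a
    have "(\<lambda>h. G (pd \<Phi> (r *\<^sub>R v, r *\<^sub>R v)) x h / norm h powr p)
        = (\<lambda>h. r * (G (pd \<Phi> (v, v)) x h / norm h powr p))"
      by (simp add: G_pd_scale[OF t])
    then show "psi p (pd \<Phi> (r *\<^sub>R v, r *\<^sub>R v)) x = r *\<^sub>R psi p (pd \<Phi> (v, v)) x"
      unfolding psi_def by (simp only: integral_mult_right_zero real_scaleR_def)
  next
    fix v :: 'a
    show "norm (psi p (pd \<Phi> (v, v)) x) \<le> norm v * (C * I)" using Lb by simp
  qed
  define K where "K = C * I + 1"
  have CI: "C * I \<ge> 0" using C(1) I0 by simp
  have K0: "K > 0" "C * I \<le> K" using CI by (auto simp: K_def)
  have rem: "\<bar>psi p \<Phi> (x + v) - psi p \<Phi> x - psi p (pd \<Phi> (v, v)) x\<bar> \<le> norm v * (C * I * norm v powr (1 - a))" for v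
  proof -
    let ?R = "\<lambda>h. (G \<Phi> (x + v) h - G \<Phi> x h - G (pd \<Phi> (v, v)) x h) / norm h powr p"
    have "psi p \<Phi> (x + v) - psi p \<Phi> x - psi p (pd \<Phi> (v, v)) x = (\<integral>h. ?R h \<partial>lborel)"
      unfolding psi_def diff_divide_distrib
      by (simp add: Bochner_Integration.integral_diff[OF Bochner_Integration.integrable_diff[OF int[OF t] int[OF t]] int[OF tp]] Bochner_Integration.integral_diff[OF int[OF t] int[OF t]])
    also have "\<bar>\<dots>\<bar> \<le> (\<integral>h. norm v * (C * norm v powr (1 - a)) * Wf a p (h::'a) \<partial>lborel)"
    proof (rule integral_abs_bound_integral)
      show "integrable lborel ?R" unfolding diff_divide_distrib
        by (intro Bochner_Integration.integrable_diff int t tp)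
      show "integrable lborel (\<lambda>h. norm v * (C * norm v powr (1 - a)) * Wf a p (h::'a))" using WI by simp
      fix h :: 'a
      have r: "\<bar>G \<Phi> (x + v) h - G \<Phi> x h - G (pd \<Phi> (v, v)) x h\<bar> \<le> norm v * (C * min (norm v) (min (norm h) 1))"
        by (rule G_rem[OF t C(1)]) (rule C(3))
      have "min (norm v) (min (norm h) 1) \<le> norm v powr (1 - a) * min (norm h) 1 powr a"
        by (rule min_powr_le) (use ex in auto)
      then have "norm v * (C * min (norm v) (min (norm h) 1)) \<le> norm v * (C * (norm v powr (1 - a) * min (norm h) 1 powr a))"
        using C(1) by (intro mult_left_mono) auto
      with r have "\<bar>G \<Phi> (x + v) h - G \<Phi> x h - G (pd \<Phi> (v, v)) x h\<bar> \<le> norm v * (C * (norm v powr (1 - a) * min (norm h) 1 powr a))"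
        by linarith
      then have "\<bar>?R h\<bar> \<le> norm v * (C * (norm v powr (1 - a) * min (norm h) 1 powr a)) / norm h powr p"
        by (simp add: divide_right_mono)
      then show "\<bar>?R h\<bar> \<le> norm v * (C * norm v powr (1 - a)) * Wf a p h"
        by (simp add: Wf_def mult_ac)
    qed
    also have "\<dots> = norm v * (C * I * norm v powr (1 - a))" by (simp add: I_def mult_ac)
    finally show ?thesis .
  qed
  show ?thesis unfolding has_derivative_at_alt
  proof (intro conjI lin allI impI)
    fix e :: real assume e: "0 < e"
    define d where "d = (e / K) powr (1 / (1 - a))"
    have d0: "d > 0" using e K0 by (simp add: d_def)
    have "\<forall>y. norm (y - x) < d \<longrightarrow> norm (psi p \<Phi> y - psi p \<Phi> x - psi p (pd \<Phi> (y - x, y - x)) x) \<le> e * norm (y - x)"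
    proof (intro allI impI)
      fix y assume y: "norm (y - x) < d"
      define v where "v = y - x"
      have "norm v powr (1 - a) \<le> d powr (1 - a)"
        using y ex by (intro powr_mono2) (auto simp: v_def)
      also have "\<dots> = e / K" using e K0 ex by (simp add: d_def powr_powr)
      finally have vp: "norm v powr (1 - a) \<le> e / K" .
      have "C * I * norm v powr (1 - a) \<le> K * (e / K)"
        using K0 C(1) I0 vp by (intro mult_mono) auto
      also have "\<dots> = e" using K0 by simp
      finally have "C * I * norm v powr (1 - a) \<le> e" .
      then have "norm v * (C * I * norm v powr (1 - a)) \<le> norm v * e"
        by (rule mult_left_mono) simp
      then have "norm v * (C * I * norm v powr (1 - a)) \<le> e * norm v" by (simp add: mult.commute)
      with rem[of v] have "\<bar>psi p \<Phi> (x + v) - psi p \<Phi> x - psi p (pd \<Phi> (v, v)) x\<bar> \<le> e * norm v"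
        by linarith
      then show "norm (psi p \<Phi> y - psi p \<Phi> x - psi p (pd \<Phi> (y - x, y - x)) x) \<le> e * norm (y - x)"
        by (simp add: v_def)
    qed
    then show "\<exists>d>0. \<forall>y. norm (y - x) < d \<longrightarrow> norm (psi p \<Phi> y - psi p \<Phi> x - psi p (pd \<Phi> (y - x, y - x)) x) \<le> e * norm (y - x)"
      using d0 by blast
  qed
qed

lemma psi_Ck:
  fixes p a :: real
  assumes ex: "0 < p - a" "p - a < real DIM('a)" "real DIM('a) < p" "0 < a" "a < 1"
  shows "test_fun (\<Phi> :: 'a::euclidean_space \<times> 'a \<Rightarrow> real) \<Longrightarrow> Ck k (psi p \<Phi>)"
proof (induction k arbitrary: \<Phi>)
  case 0
  have "continuous (at x) (psi p \<Phi>)" for x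
    using has_derivative_continuous[OF psi_deriv[OF 0 ex]] .
  then show ?case by (simp add: continuous_at_imp_continuous_on)
next
  case (Suc k)
  have d: "(psi p \<Phi> has_derivative (\<lambda>v. psi p (pd \<Phi> (v, v)) x)) (at x)" for x
    using psi_deriv[OF Suc.prems ex] .
  have "frechet_derivative (psi p \<Phi>) (at x) b = psi p (pd \<Phi> (b, b)) x" for x b
    using frechet_derivative_at[OF d[of x]] by metis
  moreover have "Ck k (psi p (pd \<Phi> (b, b)))" for b
    using Suc.IH[OF test_pd[OF Suc.prems]] .
  ultimately show ?case using d by (auto simp: differentiable_on_def differentiable_def) blast
qed



lemma test_integrable: assumes "test_fun (\<phi> :: 'a::euclidean_space \<Rightarrow> real)"
  shows "integrable lborel \<phi>"
proof -
  let ?K = "closure {y. \<phi> y \<noteq> 0}"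
  have "compact ?K" using assms by (simp add: test_fun_def compact_closure)
  moreover have "continuous_on ?K \<phi>"
    using Ck_cont[OF test_smooth[OF assms, of 0]] by (rule continuous_on_subset) simp
  ultimately have int: "integrable lborel (\<lambda>x. indicator ?K x *\<^sub>R \<phi> x)" by (rule borel_integrable_compact)
  have eq: "(\<lambda>x. indicator ?K x *\<^sub>R \<phi> x) = \<phi>"
  proof (rule ext)
    fix x
    show "indicator ?K x *\<^sub>R \<phi> x = \<phi> x"
    proof (cases "x \<in> ?K")
      case False then have "\<phi> x = 0" using closure_subset[of "{y. \<phi> y \<noteq> 0}"] by auto
      then show ?thesis by simp
    qed simp
  qed
  show ?thesis using int unfolding eq .
qed

lemma shift_integral:
  fixes f :: "'a::euclidean_space \<Rightarrow> real"
  assumes [measurable]: "f \<in> borel_measurable borel"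
  shows "(\<integral>y. f y \<partial>lborel) = (\<integral>h. f (x + h) \<partial>lborel)"
    and "integrable lborel f \<longleftrightarrow> integrable lborel (\<lambda>h. f (x + h))"
proof -
  have m: "(+) x \<in> measurable lborel borel" by simp
  have "(\<integral>y. f y \<partial>lborel) = (\<integral>y. f y \<partial>(distr lborel borel ((+) x)))"
    by (simp add: lborel_distr_plus)
  also have "\<dots> = (\<integral>h. f (x + h) \<partial>lborel)" by (rule integral_distr[OF m]) simp
  finally show "(\<integral>y. f y \<partial>lborel) = (\<integral>h. f (x + h) \<partial>lborel)" .
  have "integrable lborel f \<longleftrightarrow> integrable (distr lborel borel ((+) x)) f"
    by (simp add: lborel_distr_plus)
  also have "\<dots> \<longleftrightarrow> integrable lborel (\<lambda>h. f (x + h))" by (rule integrable_distr_eq[OF m]) simp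
  finally show "integrable lborel f \<longleftrightarrow> integrable lborel (\<lambda>h. f (x + h))" .
qed

theorem proposition7p3:
  fixes s :: real and \<Phi> :: "(real^'n) \<times> (real^'n) \<Rightarrow> real"
    and T :: "(real^'n \<Rightarrow> real) \<Rightarrow> real"
    and S :: "((real^'n) \<times> (real^'n) \<Rightarrow> real) \<Rightarrow> real"
  assumes "0 < s" "s < 1/2"
    and "\<And>\<phi>. T \<phi> = (\<integral>x. \<phi> x \<partial>lborel)"
    and "\<And>\<Theta>. S \<Theta> = (\<integral>z. (\<Theta> (fst z, snd z) - \<Theta> (fst z, fst z)) /
                     norm (fst z - snd z) powr (real CARD('n) + 2 * s) \<partial>lborel)"
    and "test_fun \<Phi>"
  shows "is_Kir T S \<Phi>
           (\<lambda>x. \<integral>y. (\<Phi> (x, y) - \<Phi> (x, x)) / norm (x - y) powr (real CARD('n) + 2 * s) \<partial>lborel)"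
proof -
  define p where "p = real CARD('n) + 2 * s"
  define a where "a = (1 + 2 * s) / 2"
  have "0 < CARD('n)" by simp
  then have n1: "1 \<le> real CARD('n)" by linarith
  have dimeq: "real DIM(real^'n) = real CARD('n)" by simp
  have pa: "p - a = real CARD('n) + s - 1/2" unfolding p_def a_def by (simp add: field_simps)
  then have e1: "0 < p - a" using assms(1,2) n1 by linarith
  have e2: "p - a < real DIM(real^'n)" unfolding dimeq pa using assms(1,2) n1 by linarith
  have e3: "real DIM(real^'n) < p" unfolding p_def dimeq using assms(1) by simp
  have e4: "0 < a" unfolding a_def using assms(1) by (simp add: field_simps)
  have e5: "a < 1" unfolding a_def using assms(2) by (simp add: field_simps)
  note ex = e1 e2 e3 e4 e5
  have a1: "a \<le> 1" using ex by simp
  have tP: "test_fun \<Phi>" by fact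
  have [measurable]: "\<Phi> \<in> borel_measurable borel" using test_meas[OF tP] .
  define f where "f = (\<lambda>x y. (\<Phi> (x, y) - \<Phi> (x, x)) / norm (x - y) powr p)"
  have fm[measurable]: "f x \<in> borel_measurable borel" for x unfolding f_def by measurable
  have fshift: "f x (x + h) = G \<Phi> x h / norm h powr p" for x h
    by (simp add: f_def G_def)
  have psi_eq: "(\<integral>y. f x y \<partial>lborel) = psi p \<Phi> x" for x
    using shift_integral(1)[OF fm, where x=x] by (simp add: fshift psi_def)
  have f_int: "integrable lborel (f x)" for x
    using shift_integral(2)[OF fm, where x=x] G_int[OF tP ex(1-4) a1, of x] by (simp add: fshift)
  obtain C where C: "C \<ge> 0" "\<And>x h. \<bar>G \<Phi> x h\<bar> \<le> C * min (norm h) 1" using G_bound[OF tP] by blast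
  define I where "I = (\<integral>h. Wf a p (h::real^'n) \<partial>lborel)"
  have WI: "integrable lborel (Wf a p :: real^'n \<Rightarrow> real)" using Wf_integrable[OF ex(1-3)] .
  have I0: "I \<ge> 0" unfolding I_def by (rule integral_nonneg_AE) (simp add: Wf_nonneg)
  have fabs: "(\<integral>y. \<bar>f x y\<bar> \<partial>lborel) \<le> C * I" for x
  proof -
    have fam: "(\<lambda>y. \<bar>f x y\<bar>) \<in> borel_measurable borel" by measurable
    have "(\<integral>y. \<bar>f x y\<bar> \<partial>lborel) = (\<integral>h. \<bar>G \<Phi> x h / norm h powr p\<bar> \<partial>lborel)"
      using shift_integral(1)[OF fam, where x=x] by (simp add: fshift)
    also have "\<dots> \<le> (\<integral>h. C * Wf a p (h::real^'n) \<partial>lborel)"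
    proof (rule Bochner_Integration.integral_mono)
      show "integrable lborel (\<lambda>h. \<bar>G \<Phi> x h / norm h powr p\<bar>)"
        using integrable_abs[OF G_int[OF tP ex(1-4) a1, of x]] .
      show "integrable lborel (\<lambda>h. C * Wf a p (h::real^'n))" using WI by simp
      show "\<bar>G \<Phi> x h / norm h powr p\<bar> \<le> C * Wf a p h" for h
        by (rule G_Wf_bound[OF C(2) ex(4) a1 C(1)])
    qed
    also have "\<dots> = C * I" by (simp add: I_def)
    finally show ?thesis .
  qed
  have psiCk: "Ck k (psi p \<Phi>)" for k by (rule psi_Ck[OF ex tP])
  have psi_fun: "(\<lambda>x. \<integral>y. (\<Phi> (x, y) - \<Phi> (x, x)) / norm (x - y) powr (real CARD('n) + 2 * s) \<partial>lborel) = psi p \<Phi>"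
    using psi_eq by (auto simp: f_def p_def)
  show ?thesis
    unfolding is_Kir_def psi_fun
  proof (intro allI impI conjI)
    fix \<phi> :: "real^'n \<Rightarrow> real" assume t\<phi>: "test_fun \<phi>"
    show "test_fun (\<lambda>x. \<phi> x * psi p \<Phi> x)"
    proof -
      have "Ck k (\<lambda>x. \<phi> x * psi p \<Phi> x)" for k
        by (rule Ck_mult[OF test_smooth[OF t\<phi>] psiCk])
      moreover have "bounded {x. \<phi> x * psi p \<Phi> x \<noteq> 0}"
        using t\<phi> unfolding test_fun_def by (rule conjE) (erule bounded_subset, auto)
      ultimately show ?thesis by (simp add: test_fun_def smooth_fun_def)
    qed
    define H where "H = (\<lambda>z. \<phi> (fst z) * f (fst z) (snd z))"
    have Hm2[measurable]: "H \<in> borel_measurable (lborel \<Otimes>\<^sub>M lborel)"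
    proof -
      have [measurable]: "\<phi> \<in> borel_measurable lborel" using test_meas[OF t\<phi>] by simp
      have [measurable]: "\<Phi> \<in> borel_measurable (lborel \<Otimes>\<^sub>M lborel)" using test_meas[OF tP] by (simp add: lborel_prod)
      show ?thesis unfolding H_def f_def by measurable
    qed
    have Hint: "integrable (lborel \<Otimes>\<^sub>M lborel) H"
    proof (rule lborel_pair.Fubini_integrable[OF Hm2])
      have "integrable lborel (\<lambda>x. \<bar>\<phi> x\<bar> * (C * I))"
        using test_integrable[OF t\<phi>] by simp
      then show "integrable lborel (\<lambda>x. \<integral>y. norm (H (x, y)) \<partial>lborel)"
      proof (rule Bochner_Integration.integrable_bound)
        show "(\<lambda>x. \<integral>y. norm (H (x, y)) \<partial>lborel) \<in> borel_measurable lborel"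
          using Hm2 by measurable
        show "AE x in lborel. norm (\<integral>y. norm (H (x, y)) \<partial>lborel) \<le> norm (\<bar>\<phi> x\<bar> * (C * I))"
        proof (intro AE_I2)
          fix x
          have "(\<integral>y. norm (H (x, y)) \<partial>lborel) = \<bar>\<phi> x\<bar> * (\<integral>y. \<bar>f x y\<bar> \<partial>lborel)"
            by (simp add: H_def abs_mult)
          moreover have "0 \<le> (\<integral>y. \<bar>f x y\<bar> \<partial>lborel)" by simp
          moreover have "\<bar>\<phi> x\<bar> * (\<integral>y. \<bar>f x y\<bar> \<partial>lborel) \<le> \<bar>\<phi> x\<bar> * (C * I)"
            using fabs[of x] by (intro mult_left_mono) auto
          ultimately show "norm (\<integral>y. norm (H (x, y)) \<partial>lborel) \<le> norm (\<bar>\<phi> x\<bar> * (C * I))"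
            using C(1) I0 by (simp add: abs_mult)
        qed
      qed
      show "AE x in lborel. integrable lborel (\<lambda>y. H (x, y))"
        using f_int by (simp add: H_def)
    qed
    have "S (\<lambda>z. \<phi> (fst z) * \<Phi> z) = (\<integral>z. H z \<partial>lborel)"
      by (simp add: assms(4) H_def f_def p_def right_diff_distrib)
    also have "\<dots> = (\<integral>z. H z \<partial>(lborel \<Otimes>\<^sub>M lborel))" by (simp add: lborel_prod)
    also have "\<dots> = (\<integral>x. (\<integral>y. H (x, y) \<partial>lborel) \<partial>lborel)"
      by (rule lborel_pair.integral_fst'[OF Hint, symmetric])
    also have "\<dots> = (\<integral>x. \<phi> x * psi p \<Phi> x \<partial>lborel)"
      by (simp add: H_def psi_eq)
    also have "\<dots> = T (\<lambda>x. \<phi> x * psi p \<Phi> x)" by (simp add: assms(3))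
    finally show "T (\<lambda>x. \<phi> x * psi p \<Phi> x) = S (\<lambda>z. \<phi> (fst z) * \<Phi> z)" by simp
  qed
qed

end
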